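(* Let $L:\mathcal{S}\times\{0,1\}\to[0,1]$ be a Lyapunov function with respect to some stochastic Markov policy $\pi_s$ (so the constraint sets below are nonempty). Define the operator $$(\mathcal{T}_{\mathrm{exp}}V)(s,x)=\max_{\pi(\cdot\mid s,x)}\big\{(\mathcal{T}_d^{\pi}V)(s,x)\ :\ (\mathcal{T}_d^{\pi}L)(s,x)\le L(s,x)\big\},$$ where the maximum is over probability distributions $\pi(\cdot\mid s,x)$ on $\mathcal{A}$. Then $\mathcal{T}_{\mathrm{exp}}$ has a unique fixed point $V_{\mathrm{exp}}$, value iteration $V\mapsto\mathcal{T}_{\mathrm{exp}}V$ converges to it, and a policy $\pi_e$ attaining the maximum in $(\mathcal{T}_{\mathrm{exp}}V_{\mathrm{exp}})(s,x)$ at every $(s,x)$ satisfies $V^{\pi_e}=V_{\mathrm{exp}}$ and is an optimal solution of $$\max_{\pi}\ V^{\pi}(s_0,1)\quad\text{s.t.}\quad(\mathcal{T}_d^{\pi}L)(s,x)\le L(s,x)\ \ \forall (s,x)\in\mathcal{S}\times\{0,1\},$$ for the initial state $s_0$; in particular $V_{\mathrm{exp}}$ is the probability of unsafety under such a policy.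
   Context: Consider a Markov decision process with finite state set $\mathcal{S}$, finite action set $\mathcal{A}$ and transition probabilities $p(s'\mid s,a)$. A target (unsafe) set $\mathcal{G}\subseteq\mathcal{S}$ and a set of terminal states $\mathcal{S}_{\mathrm{term}}\subseteq\mathcal{S}$ are given, and $\mathcal{S}'=\mathcal{S}\setminus\mathcal{S}_{\mathrm{term}}$. The process is augmented with a variable $x_t\in\{0,1\}$ defined by $x_{t+1}=x_t\mathbf{1}_{\mathcal{G}^c}(s_t)$, so $(s_t,x_t)$ is Markov. A (stochastic Markov) policy $\pi$ gives probabilities $\pi(a\mid s,x)$. Let $T^*$ be the first time $t$ with $s_t\in\mathcal{S}_{\mathrm{term}}$. Standing assumption: there is an integer $m$ such that, for every policy and every initial state, $\mathcal{S}_{\mathrm{term}}$ is reached within $m$ steps with positive probability. The stage cost is $d(s,x)=x\,\mathbf{1}_{\mathcal{G}}(s)$ and $V^\pi(s,x)=\mathbb{E}^\pi\big[\sum_{t=0}^{T^*-1}d(s_t,x_t)\mid (s_0,x_0)=(s,x)\big]$ (probability of unsafety when $x=1$). The Bellman operator $\mathcal{T}_d^\pi$ acts on $V:\mathcal{S}\times\{0,1\}\to\mathbb{R}$ by $(\mathcal{T}_d^\pi V)(s,x)=d(s,x)+\sum_{a}\pi(a\mid s,x)\sum_{s'}p(s'\mid s,a)\,V(s',x\mathbf{1}_{\mathcal{G}^c}(s))$ for $s\in\mathcal{S}'$, and $(\mathcal{T}_d^\pi V)(s,x)=0$ for $s\in\mathcal{S}_{\mathrm{term}}$. Given $\alpha\in(0,1)$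 and $S_0\subseteq\mathcal{S}$, a function $L:\mathcal{S}\times\{0,1\}\to[0,1]$ is a Lyapunov function with respect to a policy $\pi$ if $(\mathcal{T}_d^{\pi}L)(s,x)\le L(s,x)$ for all $(s,x)\in\mathcal{S}\times\{0,1\}$ and $L(s,1)\le\alpha$ for all $s\in S_0$. *)

theory Defs
  imports Complex_Main
begin

text \<open>The augmented state is (s, x) with x :: bool
  (True = 1, False = 0).\<close>

definition is_mdp :: "('s::finite \<Rightarrow> 'a::finite \<Rightarrow> 's \<Rightarrow> real) \<Rightarrow> bool" where
  "is_mdp p \<longleftrightarrow> (\<forall>s a s'. 0 \<le> p s a s') \<and> (\<forall>s a. (\<Sum>s'\<in>UNIV. p s a s') = 1)"

definition is_dist :: "('a::finite \<Rightarrow> real) \<Rightarrow> bool" where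
  "is_dist q \<longleftrightarrow> (\<forall>a. 0 \<le> q a) \<and> (\<Sum>a\<in>UNIV. q a) = 1"

definition is_policy :: "('s \<Rightarrow> bool \<Rightarrow> 'a::finite \<Rightarrow> real) \<Rightarrow> bool" where
  "is_policy \<pi> \<longleftrightarrow> (\<forall>s x. is_dist (\<pi> s x))"

definition dcost :: "'s set \<Rightarrow> 's \<Rightarrow> bool \<Rightarrow> real" where
  "dcost G s x = (if x \<and> s \<in> G then 1 else 0)"

text \<open>One-step transition probability of the augmented chain (s_t,x_t) -> (s_{t+1},x_{t+1})
  under policy pi, restricted to the event that s_t is not terminal.\<close>
definition kern :: "('s::finite \<Rightarrow> 'a::finite \<Rightarrow> 's \<Rightarrow> real) \<Rightarrow> 's set \<Rightarrow> 's set
    \<Rightarrow> ('s \<Rightarrow> bool \<Rightarrow> 'a \<Rightarrow> real) \<Rightarrow> 's \<times> bool \<Rightarrow> 's \<times> bool \<Rightarrow> real" where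
  "kern p G Sterm \<pi> z w =
     (if fst z \<in> Sterm then 0
      else (\<Sum>a\<in>UNIV. \<pi> (fst z) (snd z) a * p (fst z) a (fst w))
           * (if snd w = (snd z \<and> fst z \<notin> G) then 1 else 0))"

text \<open>occ ... z n w = P( (s_n,x_n) = w and s_0,...,s_{n-1} \<notin> Sterm | (s_0,x_0) = z )\<close>
fun occ :: "('s::finite \<Rightarrow> 'a::finite \<Rightarrow> 's \<Rightarrow> real) \<Rightarrow> 's set \<Rightarrow> 's set
    \<Rightarrow> ('s \<Rightarrow> bool \<Rightarrow> 'a \<Rightarrow> real) \<Rightarrow> 's \<times> bool \<Rightarrow> nat \<Rightarrow> 's \<times> bool \<Rightarrow> real" where
  "occ p G Sterm \<pi> z 0 w = (if w = z then 1 else 0)"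
| "occ p G Sterm \<pi> z (Suc n) w =
     (\<Sum>v\<in>UNIV. occ p G Sterm \<pi> z n v * kern p G Sterm \<pi> v w)"

text \<open>V^pi(s,x) = E[ sum_{t < T*} d(s_t,x_t) ] = sum_t E[ d(s_t,x_t) 1{t < T*} ]
  (Tonelli; t < T* iff s_0,...,s_t are all non-terminal).\<close>
definition Vpi :: "('s::finite \<Rightarrow> 'a::finite \<Rightarrow> 's \<Rightarrow> real) \<Rightarrow> 's set \<Rightarrow> 's set
    \<Rightarrow> ('s \<Rightarrow> bool \<Rightarrow> 'a \<Rightarrow> real) \<Rightarrow> 's \<times> bool \<Rightarrow> real" where
  "Vpi p G Sterm \<pi> z =
     (\<Sum>t. \<Sum>w\<in>UNIV. occ p G Sterm \<pi> z t w * (if fst w \<in> Sterm then 0 else dcost G (fst w) (snd w)))"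

text \<open>Probability that s_0,...,s_n are all non-terminal (i.e. T* > n).\<close>
definition not_term_prob :: "('s::finite \<Rightarrow> 'a::finite \<Rightarrow> 's \<Rightarrow> real) \<Rightarrow> 's set \<Rightarrow> 's set
    \<Rightarrow> ('s \<Rightarrow> bool \<Rightarrow> 'a \<Rightarrow> real) \<Rightarrow> 's \<times> bool \<Rightarrow> nat \<Rightarrow> real" where
  "not_term_prob p G Sterm \<pi> z n = (\<Sum>w\<in>{w. fst w \<notin> Sterm}. occ p G Sterm \<pi> z n w)"

definition standing_assumption :: "('s::finite \<Rightarrow> 'a::finite \<Rightarrow> 's \<Rightarrow> real) \<Rightarrow> 's set \<Rightarrow> 's set \<Rightarrow> bool" where
  "standing_assumption p G Sterm \<longleftrightarrow>
     (\<exists>m::nat. \<forall>\<pi> z. is_policy \<pi> \<longrightarrow> not_term_prob p G Sterm \<pi> z m < 1)"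

definition Td_loc :: "('s \<Rightarrow> 'a::finite \<Rightarrow> 's::finite \<Rightarrow> real) \<Rightarrow> 's set \<Rightarrow> 's set
    \<Rightarrow> ('a \<Rightarrow> real) \<Rightarrow> ('s \<times> bool \<Rightarrow> real) \<Rightarrow> 's \<Rightarrow> bool \<Rightarrow> real" where
  "Td_loc p G Sterm q V s x =
     (if s \<in> Sterm then 0
      else dcost G s x + (\<Sum>a\<in>UNIV. q a * (\<Sum>s'\<in>UNIV. p s a s' * V (s', x \<and> s \<notin> G))))"

definition Td :: "('s \<Rightarrow> 'a::finite \<Rightarrow> 's::finite \<Rightarrow> real) \<Rightarrow> 's set \<Rightarrow> 's set
    \<Rightarrow> ('s \<Rightarrow> bool \<Rightarrow> 'a \<Rightarrow> real) \<Rightarrow> ('s \<times> bool \<Rightarrow> real) \<Rightarrow> 's \<times> bool \<Rightarrow> real" where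
  "Td p G Sterm \<pi> V z = Td_loc p G Sterm (\<pi> (fst z) (snd z)) V (fst z) (snd z)"

definition lyapunov :: "('s \<Rightarrow> 'a::finite \<Rightarrow> 's::finite \<Rightarrow> real) \<Rightarrow> 's set \<Rightarrow> 's set
    \<Rightarrow> real \<Rightarrow> 's set \<Rightarrow> ('s \<times> bool \<Rightarrow> real) \<Rightarrow> ('s \<Rightarrow> bool \<Rightarrow> 'a \<Rightarrow> real) \<Rightarrow> bool" where
  "lyapunov p G Sterm \<alpha> S0 L \<pi> \<longleftrightarrow>
     (\<forall>z. 0 \<le> L z \<and> L z \<le> 1) \<and>
     (\<forall>z. Td p G Sterm \<pi> L z \<le> L z) \<and>
     (\<forall>s\<in>S0. L (s, True) \<le> \<alpha>)"

definition feasible_loc :: "('s \<Rightarrow> 'a::finite \<Rightarrow> 's::finite \<Rightarrow> real) \<Rightarrow> 's set \<Rightarrow> 's set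
    \<Rightarrow> ('s \<times> bool \<Rightarrow> real) \<Rightarrow> 's \<Rightarrow> bool \<Rightarrow> ('a \<Rightarrow> real) \<Rightarrow> bool" where
  "feasible_loc p G Sterm L s x q \<longleftrightarrow> is_dist q \<and> Td_loc p G Sterm q L s x \<le> L (s, x)"

text \<open>T_exp V (s,x) = max over feasible q of (T_d^q V)(s,x) (the max is attained; written as Sup).\<close>
definition Texp :: "('s \<Rightarrow> 'a::finite \<Rightarrow> 's::finite \<Rightarrow> real) \<Rightarrow> 's set \<Rightarrow> 's set
    \<Rightarrow> ('s \<times> bool \<Rightarrow> real) \<Rightarrow> ('s \<times> bool \<Rightarrow> real) \<Rightarrow> 's \<times> bool \<Rightarrow> real" where
  "Texp p G Sterm L V z =
     Sup {Td_loc p G Sterm q V (fst z) (snd z) | q. feasible_loc p G Sterm L (fst z) (snd z) q}"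

end

theory Submission
  imports Defs
begin

definition ddist :: "('z::finite \<Rightarrow> real) \<Rightarrow> ('z \<Rightarrow> real) \<Rightarrow> real" where
  "ddist V W = Max (range (\<lambda>z. \<bar>V z - W z\<bar>))"

lemma ddist_ge: "\<bar>V z - W z\<bar> \<le> ddist V W"
  unfolding ddist_def by (rule Max_ge) auto

lemma ddist_nonneg: "0 \<le> ddist V W"
  using ddist_ge[of V undefined W] by linarith

lemma ddist_le: "(\<And>z. \<bar>V z - W z\<bar> \<le> c) \<Longrightarrow> ddist V W \<le> c"
  unfolding ddist_def by (subst Max_le_iff) auto

lemma ddist_tri: "ddist U W \<le> ddist U V + ddist V W"
proof (rule ddist_le)
  fix z
  have "\<bar>U z - W z\<bar> \<le> \<bar>U z - V z\<bar> + \<bar>V z - W z\<bar>" by linarith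
  thus "\<bar>U z - W z\<bar> \<le> ddist U V + ddist V W" using ddist_ge[of U z V] ddist_ge[of V z W] by linarith
qed

lemma banach_fin:
  fixes S :: "('z::finite \<Rightarrow> real) \<Rightarrow> 'z \<Rightarrow> real"
  assumes S: "\<And>V W z. \<bar>S V z - S W z\<bar> \<le> \<gamma> * ddist V W"
    and g0: "0 \<le> \<gamma>" and g1: "\<gamma> < 1"
  shows "\<exists>F. S F = F"
proof -
  have Sd: "ddist (S V) (S W) \<le> \<gamma> * ddist V W" for V W by (rule ddist_le) (rule S)
  have iter: "\<bar>(S^^k) V z - (S^^k) W z\<bar> \<le> \<gamma>^k * ddist V W" for k V W z
  proof (induction k arbitrary: z)
    case 0 then show ?case using ddist_ge by simp
  next
    case (Suc k)
    have "ddist ((S^^k) V) ((S^^k) W) \<le> \<gamma>^k * ddist V W" by (rule ddist_le) (rule Suc)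
    hence "\<gamma> * ddist ((S^^k) V) ((S^^k) W) \<le> \<gamma> * (\<gamma>^k * ddist V W)" using g0 by (simp add: mult_left_mono)
    then show ?case using S[of "(S^^k) V" z "(S^^k) W"] by simp
  qed
  define y0 :: "'z \<Rightarrow> real" where "y0 = (\<lambda>_. 0)"
  define y where "y k = (S^^k) y0" for k
  define D where "D = ddist (S y0) y0"
  define C where "C = D / (1 - \<gamma>)"
  have C0: "0 \<le> C" unfolding C_def D_def using ddist_nonneg[of "S y0" y0] g1 by simp
  have CD: "\<gamma> * C + D = C" unfolding C_def using g1 by (simp add: field_simps)
  have bnd: "ddist (y k) y0 \<le> C" for k
  proof (induction k)
    case 0 then show ?case using C0 by (simp add: y_def ddist_def)
  next
    case (Suc k)
    have "ddist (y (Suc k)) y0 \<le> ddist (S (y k)) (S y0) + ddist (S y0) y0"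
      unfolding y_def by (simp add: ddist_tri)
    also have "\<dots> \<le> \<gamma> * ddist (y k) y0 + D" using Sd unfolding D_def by simp
    also have "\<dots> \<le> \<gamma> * C + D" using Suc g0 by (simp add: mult_left_mono)
    finally show ?case using CD by simp
  qed
  have cau: "\<bar>y (k + j) z - y k z\<bar> \<le> \<gamma>^k * C" for k j z
  proof -
    have "y (k + j) = (S^^k) (y j)" unfolding y_def by (simp add: funpow_add)
    hence "\<bar>y (k + j) z - y k z\<bar> \<le> \<gamma>^k * ddist (y j) y0" using iter[of k "y j" z y0] by (simp add: y_def)
    also have "\<dots> \<le> \<gamma>^k * C" using bnd g0 by (simp add: mult_left_mono)
    finally show ?thesis .
  qed
  have small: "\<exists>M. \<gamma>^M * C < e" if e0: "e > 0" for e
  proof -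
    obtain M where "\<gamma>^M < e / (C + 1)" using real_arch_pow_inv[of "e/(C+1)" \<gamma>] e0 C0 g1 by auto
    hence "\<gamma>^M * (C + 1) < e" using C0 by (simp add: field_simps)
    moreover have "\<gamma>^M * C \<le> \<gamma>^M * (C+1)" using g0 by (intro mult_left_mono) auto
    ultimately show ?thesis by (intro exI[of _ M]) linarith
  qed
  have pmono: "\<gamma>^n \<le> \<gamma>^m" if "m \<le> n" for m n using that g0 g1 by (simp add: power_decreasing)
  have "\<exists>l. (\<lambda>k. y k z) \<longlonglongrightarrow> l" for z
  proof -
    have "Cauchy (\<lambda>k. y k z)"
    proof (rule metric_CauchyI)
      fix e :: real assume "e > 0"
      then obtain M where M: "\<gamma>^M * C < e" using small by blast
      show "\<exists>M. \<forall>m\<ge>M. \<forall>n\<ge>M. dist (y m z) (y n z) < e"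
      proof (intro exI allI impI)
        fix m n assume mn: "M \<le> m" "M \<le> n"
        have "\<bar>y m z - y n z\<bar> \<le> \<gamma>^M * C"
        proof (cases "m \<le> n")
          case True
          have "\<bar>y n z - y m z\<bar> \<le> \<gamma>^m * C" using cau[of m "n - m" z] True by simp
          also have "\<dots> \<le> \<gamma>^M * C" using pmono[OF mn(1)] C0 by (simp add: mult_right_mono)
          finally show ?thesis by linarith
        next
          case False
          have "\<bar>y m z - y n z\<bar> \<le> \<gamma>^n * C" using cau[of n "m - n" z] False by simp
          also have "\<dots> \<le> \<gamma>^M * C" using pmono[OF mn(2)] C0 by (simp add: mult_right_mono)
          finally show ?thesis .
        qed
        thus "dist (y m z) (y n z) < e" using M by (simp add: dist_real_def)
      qed
    qed
    thus ?thesis using Cauchy_convergent_iff convergent_def by blast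
  qed
  then obtain F where F: "\<And>z. (\<lambda>k. y k z) \<longlonglongrightarrow> F z" by metis
  have yF: "\<bar>y k z - F z\<bar> \<le> \<gamma>^k * C" for k z
  proof -
    have "(\<lambda>j. y (k + j) z) \<longlonglongrightarrow> F z" using LIMSEQ_ignore_initial_segment[OF F[of z], of k] by (simp add: add.commute)
    hence "(\<lambda>j. \<bar>y (k + j) z - y k z\<bar>) \<longlonglongrightarrow> \<bar>F z - y k z\<bar>" by (intro tendsto_intros)
    hence "\<bar>F z - y k z\<bar> \<le> \<gamma>^k * C" by (rule LIMSEQ_le_const2) (use cau in auto)
    thus ?thesis by linarith
  qed
  have "S F z = F z" for z
  proof -
    have "(\<lambda>k. y (Suc k) z) \<longlonglongrightarrow> S F z"
    proof (rule LIMSEQ_I)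
      fix r :: real assume "r > 0"
      then obtain M where M: "\<gamma>^M * C < r" using small by blast
      show "\<exists>no. \<forall>n\<ge>no. norm (y (Suc n) z - S F z) < r"
      proof (intro exI allI impI)
        fix n assume "M \<le> n"
        have "ddist (y n) F \<le> \<gamma>^n * C" by (rule ddist_le) (rule yF)
        hence "\<bar>y (Suc n) z - S F z\<bar> \<le> \<gamma> * (\<gamma>^n * C)"
          using S[of "y n" z F] g0 mult_left_mono unfolding y_def by fastforce
        also have "\<dots> \<le> \<gamma>^n * C" using g0 g1 C0 by (simp add: mult_left_le_one_le mult_nonneg_nonneg)
        also have "\<dots> \<le> \<gamma>^M * C" using pmono[OF \<open>M \<le> n\<close>] C0 by (simp add: mult_right_mono)
        finally show "norm (y (Suc n) z - S F z) < r" using M by simp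
      qed
    qed
    moreover have "(\<lambda>k. y (Suc k) z) \<longlonglongrightarrow> F z" using F[of z] by (rule LIMSEQ_Suc)
    ultimately show ?thesis using LIMSEQ_unique by blast
  qed
  thus ?thesis by blast
qed


lemma contraction_fp:
  fixes T :: "('z::finite \<Rightarrow> real) \<Rightarrow> 'z \<Rightarrow> real"
  assumes A1: "\<And>V W z. \<bar>T V z - T W z\<bar> \<le> ddist V W"
    and A2: "\<And>V W z. \<bar>(T^^N) V z - (T^^N) W z\<bar> \<le> \<gamma> * ddist V W"
    and g0: "0 \<le> \<gamma>" and g1: "\<gamma> < 1" and N0: "0 < N"
  shows "\<exists>F. T F = F \<and> (\<forall>V0 z. (\<lambda>n. (T^^n) V0 z) \<longlonglongrightarrow> F z)"
proof -
  obtain F where SF: "(T^^N) F = F" using banach_fin[of "T^^N" \<gamma>, OF A2 g0 g1] by blast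
  have r: "\<bar>(T^^r) V z - (T^^r) W z\<bar> \<le> ddist V W" for r V W z
  proof (induction r arbitrary: z)
    case 0 then show ?case using ddist_ge by simp
  next
    case (Suc r)
    have "ddist ((T^^r) V) ((T^^r) W) \<le> ddist V W" by (rule ddist_le) (rule Suc)
    then show ?case using A1[of "(T^^r) V" z "(T^^r) W"] by simp
  qed
  have kr: "\<bar>(T^^(N*k + r)) V z - (T^^(N*k + r)) W z\<bar> \<le> \<gamma>^k * ddist V W" for k r V W z
  proof (induction k arbitrary: z)
    case 0 then show ?case using r by simp
  next
    case (Suc k)
    have e: "T^^(N * Suc k + r) = T^^N \<circ> T^^(N*k + r)"
      by (simp add: funpow_add[symmetric] algebra_simps)
    have "ddist ((T^^(N*k+r)) V) ((T^^(N*k+r)) W) \<le> \<gamma>^k * ddist V W" by (rule ddist_le) (rule Suc)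
    hence "\<gamma> * ddist ((T^^(N*k+r)) V) ((T^^(N*k+r)) W) \<le> \<gamma> * (\<gamma>^k * ddist V W)" using g0 by (simp add: mult_left_mono)
    then show ?case unfolding e using A2[of "(T^^(N*k+r)) V" z "(T^^(N*k+r)) W"] by simp
  qed
  have nd: "\<bar>(T^^n) V z - (T^^n) W z\<bar> \<le> \<gamma>^(n div N) * ddist V W" for n V W z
    using kr[of "n div N" "n mod N" V z W] by simp
  have TF: "T F = F"
  proof -
    have "(T^^N) (T F) = T F" using SF by (metis funpow_swap1)
    have "\<bar>T F z - F z\<bar> \<le> \<gamma> * ddist (T F) F" for z
      using A2[of "T F" z F] \<open>(T^^N) (T F) = T F\<close> SF by simp
    hence "ddist (T F) F \<le> \<gamma> * ddist (T F) F" by (rule ddist_le)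
    hence "ddist (T F) F \<le> 0" using g1 ddist_nonneg[of "T F" F]
      by (metis less_eq_real_def mult_le_cancel_right1 not_le)
    hence "\<bar>T F z - F z\<bar> \<le> 0" for z using ddist_ge[of "T F" z F] by linarith
    thus ?thesis by force
  qed
  have Fn: "(T^^n) F = F" for n by (induction n) (simp_all add: TF)
  have conv: "(\<lambda>n. (T^^n) V0 z) \<longlonglongrightarrow> F z" for V0 z
  proof (rule LIMSEQ_I)
    fix e :: real assume e0: "e > 0"
    define C where "C = ddist V0 F"
    have C0: "0 \<le> C" unfolding C_def by (rule ddist_nonneg)
    obtain M where "\<gamma>^M < e / (C + 1)" using real_arch_pow_inv[of "e/(C+1)" \<gamma>] e0 C0 g1 by auto
    hence "\<gamma>^M * (C + 1) < e" using C0 by (simp add: field_simps)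
    moreover have "\<gamma>^M * C \<le> \<gamma>^M * (C+1)" using g0 by (intro mult_left_mono) auto
    ultimately have M: "\<gamma>^M * C < e" by linarith
    show "\<exists>no. \<forall>n\<ge>no. norm ((T^^n) V0 z - F z) < e"
    proof (intro exI allI impI)
      fix n assume "N * M \<le> n"
      hence "M \<le> n div N" using N0 by (metis div_le_mono nonzero_mult_div_cancel_left not_gr0)
      hence "\<gamma>^(n div N) \<le> \<gamma>^M" using g0 g1 by (simp add: power_decreasing)
      hence "\<gamma>^(n div N) * C \<le> \<gamma>^M * C" using C0 by (simp add: mult_right_mono)
      moreover have "\<bar>(T^^n) V0 z - F z\<bar> \<le> \<gamma>^(n div N) * C" using nd[of n V0 z F] Fn unfolding C_def by simp
      ultimately show "norm ((T^^n) V0 z - F z) < e" using M by simp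
    qed
  qed
  show ?thesis using TF conv by blast
qed


definition Mop :: "('s::finite \<Rightarrow> 'a::finite \<Rightarrow> 's \<Rightarrow> real) \<Rightarrow> 's set \<Rightarrow> 's set
    \<Rightarrow> ('s \<times> bool \<Rightarrow> real) \<Rightarrow> 's \<times> bool \<Rightarrow> real" where
  "Mop p G Sterm f z = (if fst z \<in> Sterm then 0
     else Max (range (\<lambda>a. \<Sum>s'\<in>UNIV. p (fst z) a s' * f (s', snd z \<and> fst z \<notin> G))))"

lemma mdp_nonneg: "is_mdp p \<Longrightarrow> 0 \<le> p s a s'" unfolding is_mdp_def by auto
lemma mdp_sum: "is_mdp p \<Longrightarrow> (\<Sum>s'\<in>UNIV. p s a s') = 1" unfolding is_mdp_def by auto

lemma Mop_mono:
  assumes "is_mdp p" "\<And>w. f w \<le> g w"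
  shows "Mop p G Sterm f z \<le> Mop p G Sterm g z"
proof (cases "fst z \<in> Sterm")
  case False
  have "Max (range (\<lambda>a. \<Sum>s'\<in>UNIV. p (fst z) a s' * f (s', snd z \<and> fst z \<notin> G)))
     \<le> Max (range (\<lambda>a. \<Sum>s'\<in>UNIV. p (fst z) a s' * g (s', snd z \<and> fst z \<notin> G)))"
  proof (rule Max.boundedI)
    fix y assume "y \<in> range (\<lambda>a. \<Sum>s'\<in>UNIV. p (fst z) a s' * f (s', snd z \<and> fst z \<notin> G))"
    then obtain a where y: "y = (\<Sum>s'\<in>UNIV. p (fst z) a s' * f (s', snd z \<and> fst z \<notin> G))" by auto
    have "y \<le> (\<Sum>s'\<in>UNIV. p (fst z) a s' * g (s', snd z \<and> fst z \<notin> G))"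
      unfolding y by (intro sum_mono mult_left_mono assms(2) mdp_nonneg[OF assms(1)])
    also have "\<dots> \<le> Max (range (\<lambda>a. \<Sum>s'\<in>UNIV. p (fst z) a s' * g (s', snd z \<and> fst z \<notin> G)))"
      by (rule Max_ge) auto
    finally show "y \<le> \<dots>" .
  qed auto
  then show ?thesis using False by (simp add: Mop_def)
qed (simp add: Mop_def)

lemma Mop_le:
  assumes "is_mdp p" "\<And>w. f w \<le> c" "0 \<le> c"
  shows "Mop p G Sterm f z \<le> c"
proof (cases "fst z \<in> Sterm")
  case False
  have "Max (range (\<lambda>a. \<Sum>s'\<in>UNIV. p (fst z) a s' * f (s', snd z \<and> fst z \<notin> G))) \<le> c"
  proof (rule Max.boundedI)
    fix y assume "y \<in> range (\<lambda>a. \<Sum>s'\<in>UNIV. p (fst z) a s' * f (s', snd z \<and> fst z \<notin> G))"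
    then obtain a where y: "y = (\<Sum>s'\<in>UNIV. p (fst z) a s' * f (s', snd z \<and> fst z \<notin> G))" by auto
    have "y \<le> (\<Sum>s'\<in>UNIV. p (fst z) a s' * c)"
      unfolding y by (intro sum_mono mult_left_mono assms(2) mdp_nonneg[OF assms(1)])
    also have "\<dots> = c" using mdp_sum[OF assms(1)] by (simp add: sum_distrib_right[symmetric])
    finally show "y \<le> c" .
  qed auto
  then show ?thesis using False by (simp add: Mop_def)
qed (simp add: Mop_def assms)

lemma Mop_nonneg:
  assumes "is_mdp p" "\<And>w. 0 \<le> f w"
  shows "0 \<le> Mop p G Sterm f z"
proof (cases "fst z \<in> Sterm")
  case False
  have "0 \<le> (\<Sum>s'\<in>UNIV. p (fst z) undefined s' * f (s', snd z \<and> fst z \<notin> G))"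
    by (intro sum_nonneg mult_nonneg_nonneg assms(2) mdp_nonneg[OF assms(1)])
  also have "\<dots> \<le> Max (range (\<lambda>a. \<Sum>s'\<in>UNIV. p (fst z) a s' * f (s', snd z \<and> fst z \<notin> G)))"
    by (rule Max_ge) auto
  finally show ?thesis using False by (simp add: Mop_def)
qed (simp add: Mop_def)

lemma Mop_scale:
  assumes "0 \<le> c"
  shows "Mop p G Sterm (\<lambda>w. c * f w) z = c * Mop p G Sterm f z"
proof (cases "fst z \<in> Sterm")
  case False
  have "Max (range (\<lambda>a. \<Sum>s'\<in>UNIV. p (fst z) a s' * (c * f (s', snd z \<and> fst z \<notin> G))))
     = Max ((*) c ` range (\<lambda>a. \<Sum>s'\<in>UNIV. p (fst z) a s' * f (s', snd z \<and> fst z \<notin> G)))"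
    by (simp add: image_image sum_distrib_left mult.left_commute)
  also have "\<dots> = c * Max (range (\<lambda>a. \<Sum>s'\<in>UNIV. p (fst z) a s' * f (s', snd z \<and> fst z \<notin> G)))"
    by (rule hom_Max_commute[symmetric]) (auto simp: max_mult_distrib_left assms)
  finally show ?thesis using False by (simp add: Mop_def)
qed (simp add: Mop_def)

lemma dist_sum_le_Max:
  assumes "is_dist q"
  shows "(\<Sum>a\<in>UNIV. q a * h a) \<le> Max (range h)"
proof -
  have "(\<Sum>a\<in>UNIV. q a * h a) \<le> (\<Sum>a\<in>UNIV. q a * Max (range h))"
    using assms unfolding is_dist_def by (intro sum_mono mult_left_mono) auto
  also have "\<dots> = Max (range h)" using assms unfolding is_dist_def by (simp add: sum_distrib_right[symmetric])
  finally show ?thesis .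
qed

lemma Td_loc_lip:
  assumes mdp: "is_mdp p" and q: "is_dist q"
  shows "\<bar>Td_loc p G Sterm q V s x - Td_loc p G Sterm q W s x\<bar>
         \<le> Mop p G Sterm (\<lambda>w. \<bar>V w - W w\<bar>) (s, x)"
proof (cases "s \<in> Sterm")
  case False
  define g where "g a = (\<Sum>s'\<in>UNIV. p s a s' * (V (s', x \<and> s \<notin> G) - W (s', x \<and> s \<notin> G)))" for a
  define h where "h a = (\<Sum>s'\<in>UNIV. p s a s' * \<bar>V (s', x \<and> s \<notin> G) - W (s', x \<and> s \<notin> G)\<bar>)" for a
  have q0: "0 \<le> q a" for a using q unfolding is_dist_def by auto
  have "Td_loc p G Sterm q V s x - Td_loc p G Sterm q W s x = (\<Sum>a\<in>UNIV. q a * g a)"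
    using False unfolding Td_loc_def g_def
    by (simp add: sum_subtractf[symmetric] right_diff_distrib[symmetric])
  also have "\<bar>\<dots>\<bar> \<le> (\<Sum>a\<in>UNIV. \<bar>q a * g a\<bar>)" by (rule sum_abs)
  also have "\<dots> \<le> (\<Sum>a\<in>UNIV. q a * h a)"
  proof (rule sum_mono)
    fix a
    have "\<bar>g a\<bar> \<le> h a" unfolding g_def h_def
      by (rule order_trans[OF sum_abs]) (simp add: abs_mult mdp_nonneg[OF mdp])
    thus "\<bar>q a * g a\<bar> \<le> q a * h a" using q0[of a] by (simp add: abs_mult mult_left_mono)
  qed
  also have "\<dots> \<le> Max (range h)" by (rule dist_sum_le_Max[OF q])
  also have "\<dots> = Mop p G Sterm (\<lambda>w. \<bar>V w - W w\<bar>) (s, x)" using False unfolding Mop_def h_def by simp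
  finally show ?thesis .
qed (simp add: Td_loc_def Mop_def)


lemma Mn_mono:
  assumes "is_mdp p" "\<And>w. f w \<le> g w"
  shows "(Mop p G Sterm ^^ n) f z \<le> (Mop p G Sterm ^^ n) g z"
  using assms(2) by (induction n arbitrary: z) (auto intro: Mop_mono[OF assms(1)])

lemma Mn_scale:
  assumes "0 \<le> c"
  shows "(Mop p G Sterm ^^ n) (\<lambda>w. c * f w) = (\<lambda>w. c * (Mop p G Sterm ^^ n) f w)"
  by (induction n) (auto simp: Mop_scale[OF assms])

lemma Mn_one:
  assumes "is_mdp p"
  shows "0 \<le> (Mop p G Sterm ^^ n) (\<lambda>_. 1) z \<and> (Mop p G Sterm ^^ n) (\<lambda>_. 1) z \<le> 1"
proof (induction n arbitrary: z)
  case 0 then show ?case by simp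
next
  case (Suc n)
  then show ?case using Mop_nonneg[OF assms] Mop_le[OF assms] by auto
qed

lemma Mop_contr:
  assumes mdp: "is_mdp p"
    and T: "\<And>V W z. \<bar>T V z - T W z\<bar> \<le> Mop p G Sterm (\<lambda>w. \<bar>V w - W w\<bar>) z"
  shows "\<bar>(T^^n) V z - (T^^n) W z\<bar> \<le> ddist V W * (Mop p G Sterm ^^ n) (\<lambda>_. 1) z"
proof -
  have "\<bar>(T^^n) V z - (T^^n) W z\<bar> \<le> (Mop p G Sterm ^^ n) (\<lambda>w. \<bar>V w - W w\<bar>) z" for z
  proof (induction n arbitrary: z)
    case 0 then show ?case by simp
  next
    case (Suc n)
    have "\<bar>(T^^Suc n) V z - (T^^Suc n) W z\<bar> \<le> Mop p G Sterm (\<lambda>w. \<bar>(T^^n) V w - (T^^n) W w\<bar>) z"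
      using T by simp
    also have "\<dots> \<le> Mop p G Sterm ((Mop p G Sterm ^^ n) (\<lambda>w. \<bar>V w - W w\<bar>)) z"
      by (rule Mop_mono[OF mdp Suc])
    finally show ?case by simp
  qed
  also have "(Mop p G Sterm ^^ n) (\<lambda>w. \<bar>V w - W w\<bar>) z \<le> (Mop p G Sterm ^^ n) (\<lambda>w. ddist V W * 1) z"
    by (rule Mn_mono[OF mdp]) (simp add: ddist_ge)
  also have "\<dots> = ddist V W * (Mop p G Sterm ^^ n) (\<lambda>_. 1) z"
    using Mn_scale[OF ddist_nonneg[of V W], where p=p and G=G and Sterm=Sterm and n=n and f="\<lambda>_. 1"] by simp
  finally show ?thesis .
qed

lemma Mop_fp:
  fixes T :: "('s::finite \<times> bool \<Rightarrow> real) \<Rightarrow> 's \<times> bool \<Rightarrow> real"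
  assumes mdp: "is_mdp p"
    and T: "\<And>V W z. \<bar>T V z - T W z\<bar> \<le> Mop p G Sterm (\<lambda>w. \<bar>V w - W w\<bar>) z"
    and N: "0 < N" "0 \<le> \<gamma>" "\<gamma> < 1" "\<And>z. (Mop p G Sterm ^^ N) (\<lambda>_. 1) z \<le> \<gamma>"
  shows "\<exists>F. T F = F \<and> (\<forall>V0 z. (\<lambda>n. (T^^n) V0 z) \<longlonglongrightarrow> F z)"
proof (rule contraction_fp[OF _ _ N(2,3,1)])
  fix V W z
  have "\<bar>(T^^1) V z - (T^^1) W z\<bar> \<le> ddist V W * (Mop p G Sterm ^^ 1) (\<lambda>_. 1) z"
    by (rule Mop_contr[OF mdp T])
  also have "\<dots> \<le> ddist V W * 1" using Mn_one[OF mdp, where G=G and Sterm=Sterm and n=1 and z=z] ddist_nonneg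
    by (intro mult_left_mono) auto
  finally show "\<bar>T V z - T W z\<bar> \<le> ddist V W" by simp
  have "\<bar>(T^^N) V z - (T^^N) W z\<bar> \<le> ddist V W * (Mop p G Sterm ^^ N) (\<lambda>_. 1) z"
    by (rule Mop_contr[OF mdp T])
  also have "\<dots> \<le> ddist V W * \<gamma>" using N(4) ddist_nonneg by (intro mult_left_mono) auto
  finally show "\<bar>(T^^N) V z - (T^^N) W z\<bar> \<le> \<gamma> * ddist V W" by (simp add: mult.commute)
qed


lemma kern_nonneg:
  assumes "is_mdp p" "is_policy \<pi>"
  shows "0 \<le> kern p G Sterm \<pi> v w"
  using assms mdp_nonneg[OF assms(1)] unfolding kern_def is_policy_def is_dist_def
  by (auto intro!: sum_nonneg mult_nonneg_nonneg)

lemma occ_nonneg: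
  assumes "is_mdp p" "is_policy \<pi>"
  shows "0 \<le> occ p G Sterm \<pi> z n w"
  by (induction n arbitrary: w) (auto intro!: sum_nonneg mult_nonneg_nonneg kern_nonneg[OF assms])

lemma sum_pair_bool:
  fixes f :: "'s::finite \<times> bool \<Rightarrow> real"
  shows "(\<Sum>v\<in>UNIV. f v) = (\<Sum>s\<in>UNIV. f (s, True) + f (s, False))"
proof -
  have "(\<Sum>v\<in>UNIV. f v) = (\<Sum>v\<in>UNIV \<times> UNIV. f v)" by (simp add: UNIV_Times_UNIV)
  also have "\<dots> = (\<Sum>s\<in>UNIV. \<Sum>b\<in>UNIV. f (s, b))" by (simp add: sum.cartesian_product)
  also have "\<dots> = (\<Sum>s\<in>UNIV. f (s, True) + f (s, False))" by (simp add: UNIV_bool add.commute)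
  finally show ?thesis .
qed

lemma kern_apply:
  "(\<Sum>v\<in>UNIV. kern p G Sterm \<pi> z v * V v) =
    (if fst z \<in> Sterm then 0 else
      (\<Sum>s'\<in>UNIV. (\<Sum>a\<in>UNIV. \<pi> (fst z) (snd z) a * p (fst z) a s') * V (s', snd z \<and> fst z \<notin> G)))"
  unfolding kern_def by (subst sum_pair_bool) (auto intro: sum.cong)


lemma sum_ind: "(\<Sum>a\<in>UNIV. (if a = (b::'a::finite) then 1 else (0::real)) * f a) = f b"
proof -
  have "(\<lambda>a. (if a = b then 1 else (0::real)) * f a) = (\<lambda>a. if a = b then f a else 0)" by auto
  show ?thesis unfolding \<open>(\<lambda>a. (if a = b then 1 else (0::real)) * f a) = (\<lambda>a. if a = b then f a else 0)\<close> by simp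
qed

lemma sum_ind2: "(\<Sum>a\<in>UNIV. f a * (if (b::'a::finite) = a then 1 else (0::real))) = f b"
proof -
  have "(\<lambda>a. f a * (if b = a then 1 else (0::real))) = (\<lambda>a. if a = b then f a else 0)" by auto
  show ?thesis unfolding \<open>(\<lambda>a. f a * (if b = a then 1 else (0::real))) = (\<lambda>a. if a = b then f a else 0)\<close> by simp
qed

lemma standing_N:
  fixes p :: "'s::finite \<Rightarrow> 'a::finite \<Rightarrow> 's \<Rightarrow> real"
  assumes mdp: "is_mdp p" and standing: "standing_assumption p G Sterm"
  shows "\<exists>N \<gamma>. 0 < N \<and> 0 \<le> \<gamma> \<and> \<gamma> < 1 \<and> (\<forall>z. (Mop p G Sterm ^^ N) (\<lambda>_. 1) z \<le> \<gamma>)"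
proof -
  define M where "M = Mop p G Sterm"
  define u where "u k = (M ^^ k) (\<lambda>_. 1)" for k
  have u01: "0 \<le> u k z" "u k z \<le> 1" for k z using Mn_one[OF mdp] unfolding u_def M_def by auto
  have uSuc: "u (Suc k) = M (u k)" for k unfolding u_def by simp
  have udec1: "u (Suc k) z \<le> u k z" for k z
  proof (induction k arbitrary: z)
    case 0 then show ?case using u01[of 1 z] by (simp add: u_def)
  next
    case (Suc k)
    show ?case unfolding uSuc[of "Suc k"] uSuc[of k] M_def by (rule Mop_mono[OF mdp]) (use Suc in \<open>simp add: uSuc M_def\<close>)
  qed
  have udec: "u k' z \<le> u k z" if "k \<le> k'" for k k' z
    using decseqD[OF decseq_SucI[of "\<lambda>k. u k z"] that] udec1 by auto
  define B where "B = {z. \<forall>k. 1 \<le> u k z}"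
  define g where "g z a k = (\<Sum>s'\<in>UNIV. p (fst z) a s' * u k (s', snd z \<and> fst z \<notin> G))" for z a k
  have gdec: "g z a k' \<le> g z a k" if "k \<le> k'" for z a k k'
    unfolding g_def by (intro sum_mono mult_left_mono udec that mdp_nonneg[OF mdp])
  have Bnt: "fst z \<notin> Sterm" if "z \<in> B" for z
  proof
    assume "fst z \<in> Sterm"
    hence "u 1 z = 0" by (simp add: u_def M_def Mop_def)
    moreover have "1 \<le> u 1 z" using that unfolding B_def by blast
    ultimately show False by simp
  qed
  have uSucg: "u (Suc k) z = Max (range (\<lambda>a. g z a k))" if "z \<in> B" for z k
    using Bnt[OF that] by (simp add: uSuc M_def Mop_def g_def)
  have act_ex: "\<exists>a. \<forall>k. 1 \<le> g z a k" if zB: "z \<in> B" for z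
  proof (rule ccontr)
    assume "\<nexists>a. \<forall>k. 1 \<le> g z a k"
    hence "\<forall>a. \<exists>k. g z a k < 1" by (meson not_le)
    then obtain kf where kf: "\<And>a. g z a (kf a) < 1" by metis
    define K where "K = (\<Sum>a\<in>UNIV. kf a)"
    have "1 \<le> u (Suc K) z" using zB unfolding B_def by blast
    hence "1 \<le> Max (range (\<lambda>a. g z a K))" using uSucg[OF zB] by simp
    moreover have "Max (range (\<lambda>a. g z a K)) \<in> range (\<lambda>a. g z a K)" by (rule Max_in) auto
    ultimately obtain a where "1 \<le> g z a K" by (metis (no_types, lifting) rangeE)
    moreover have "g z a K \<le> g z a (kf a)" by (rule gdec) (simp add: K_def member_le_sum)
    ultimately show False using kf[of a] by linarith
  qed
  define act where "act z = (SOME a. \<forall>k. 1 \<le> g z a k)" for z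
  have act: "1 \<le> g z (act z) k" if "z \<in> B" for z k
    using someI_ex[OF act_ex[OF that]] unfolding act_def by blast
  have closed: "(s', snd z \<and> fst z \<notin> G) \<in> B" if zB: "z \<in> B" and pp: "p (fst z) (act z) s' \<noteq> 0" for z s'
    unfolding B_def
  proof (intro CollectI allI)
    fix k
    let ?f = "\<lambda>s'. p (fst z) (act z) s' * (1 - u k (s', snd z \<and> fst z \<notin> G))"
    have "(\<Sum>s'\<in>UNIV. ?f s') = 1 - g z (act z) k"
      unfolding g_def by (simp add: right_diff_distrib sum_subtractf mdp_sum[OF mdp])
    hence s0: "(\<Sum>s'\<in>UNIV. ?f s') \<le> 0" using act[OF zB, of k] by linarith
    have fnn: "\<forall>s'\<in>UNIV. 0 \<le> ?f s'" using u01 mdp_nonneg[OF mdp] by (auto intro: mult_nonneg_nonneg)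
    have "0 \<le> (\<Sum>s'\<in>UNIV. ?f s')" using fnn by (intro sum_nonneg) auto
    hence "(\<Sum>s'\<in>UNIV. ?f s') = 0" using s0 by linarith
    hence "?f s' = 0" using sum_nonneg_eq_0_iff[of UNIV ?f] fnn by auto
    thus "1 \<le> u k (s', snd z \<and> fst z \<notin> G)" using pp by simp
  qed
  define \<pi> where "\<pi> s x a = (if a = act (s, x) then 1 else (0::real))" for s x a
  have pol: "is_policy \<pi>" unfolding is_policy_def is_dist_def \<pi>_def by simp
  have kB: "kern p G Sterm \<pi> v w = (if snd w = (snd v \<and> fst v \<notin> G) then p (fst v) (act v) (fst w) else 0)"
    if "v \<in> B" for v w
  proof -
    have "(\<Sum>a\<in>UNIV. \<pi> (fst v) (snd v) a * p (fst v) a (fst w)) = p (fst v) (act v) (fst w)"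
      unfolding \<pi>_def using sum_ind[of "act v" "\<lambda>a. p (fst v) a (fst w)"] by simp
    thus ?thesis using Bnt[OF that] unfolding kern_def by (cases "snd v"; cases "fst v \<in> G"; simp)
  qed
  have k0: "kern p G Sterm \<pi> v w = 0" if "v \<in> B" "w \<notin> B" for v w
  proof -
    have "p (fst v) (act v) (fst w) = 0" if "snd w = (snd v \<and> fst v \<notin> G)"
      using closed[OF \<open>v \<in> B\<close>, of "fst w"] that \<open>w \<notin> B\<close> by (cases w) auto
    thus ?thesis unfolding kB[OF \<open>v \<in> B\<close>] by auto
  qed
  have ksum: "(\<Sum>w\<in>B. kern p G Sterm \<pi> v w) = 1" if vB: "v \<in> B" for v
  proof -
    have "(\<Sum>w\<in>B. kern p G Sterm \<pi> v w) = (\<Sum>w\<in>UNIV. kern p G Sterm \<pi> v w)"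
      by (rule sum.mono_neutral_left) (auto simp: k0[OF vB])
    also have "\<dots> = (\<Sum>w\<in>UNIV. kern p G Sterm \<pi> v w * 1)" by simp
    also have "\<dots> = (\<Sum>s'\<in>UNIV. (\<Sum>a\<in>UNIV. \<pi> (fst v) (snd v) a * p (fst v) a s'))"
      unfolding kern_apply using Bnt[OF vB] by simp
    also have "\<dots> = (\<Sum>s'\<in>UNIV. p (fst v) (act v) s')" unfolding \<pi>_def by (simp add: sum_ind)
    also have "\<dots> = 1" by (rule mdp_sum[OF mdp])
    finally show ?thesis .
  qed
  have "B = {}"
  proof (rule ccontr)
    assume "B \<noteq> {}"
    then obtain z0 where z0: "z0 \<in> B" by blast
    have occB: "1 \<le> (\<Sum>w\<in>B. occ p G Sterm \<pi> z0 n w)" for n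
    proof (induction n)
      case 0 then show ?case using z0 by (simp add: if_distrib cong: if_cong)
    next
      case (Suc n)
      have "(\<Sum>w\<in>B. occ p G Sterm \<pi> z0 (Suc n) w)
          = (\<Sum>v\<in>UNIV. occ p G Sterm \<pi> z0 n v * (\<Sum>w\<in>B. kern p G Sterm \<pi> v w))"
        by (simp add: sum_distrib_left sum.swap[of _ B])
      also have "\<dots> \<ge> (\<Sum>v\<in>B. occ p G Sterm \<pi> z0 n v * (\<Sum>w\<in>B. kern p G Sterm \<pi> v w))"
        by (rule sum_mono2) (auto intro!: mult_nonneg_nonneg sum_nonneg occ_nonneg[OF mdp pol] kern_nonneg[OF mdp pol])
      also have "(\<Sum>v\<in>B. occ p G Sterm \<pi> z0 n v * (\<Sum>w\<in>B. kern p G Sterm \<pi> v w)) = (\<Sum>v\<in>B. occ p G Sterm \<pi> z0 n v)"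
        by (simp add: ksum)
      finally show ?case using Suc by linarith
    qed
    obtain m where m: "\<And>\<pi> z. is_policy \<pi> \<Longrightarrow> not_term_prob p G Sterm \<pi> z m < 1"
      using standing unfolding standing_assumption_def by blast
    have "(\<Sum>w\<in>B. occ p G Sterm \<pi> z0 m w) \<le> not_term_prob p G Sterm \<pi> z0 m"
      unfolding not_term_prob_def by (rule sum_mono2) (use Bnt in \<open>auto simp: occ_nonneg[OF mdp pol]\<close>)
    thus False using m[OF pol, of z0] occB[of m] by linarith
  qed
  hence "\<forall>z. \<exists>k. u k z < 1" unfolding B_def by (auto simp: not_le)
  then obtain kf where kf: "\<And>z. u (kf z) z < 1" by metis
  define N where "N = Suc (\<Sum>z\<in>UNIV. kf z)"
  have uN: "u N z < 1" for z
  proof -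
    have "kf z \<le> N" unfolding N_def using member_le_sum[of z UNIV kf] by simp
    thus ?thesis using udec[of "kf z" N z] kf[of z] by linarith
  qed
  define \<gamma> where "\<gamma> = Max (range (\<lambda>z. u N z))"
  have "\<gamma> \<in> range (\<lambda>z. u N z)" unfolding \<gamma>_def by (rule Max_in) auto
  hence g1: "\<gamma> < 1" using uN by auto
  have uG: "u N z \<le> \<gamma>" for z unfolding \<gamma>_def by (rule Max_ge) auto
  have g0: "0 \<le> \<gamma>" using u01(1)[of N undefined] uG[of undefined] by linarith
  note uG
  thus ?thesis using g0 g1 unfolding N_def u_def M_def by blast
qed


definition cc :: "'s set \<Rightarrow> 's set \<Rightarrow> 's \<times> bool \<Rightarrow> real" where
  "cc G Sterm w = (if fst w \<in> Sterm then 0 else dcost G (fst w) (snd w))"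

lemma Td_kern:
  "Td p G Sterm \<pi> V z = cc G Sterm z + (\<Sum>v\<in>UNIV. kern p G Sterm \<pi> z v * V v)"
proof (cases "fst z \<in> Sterm")
  case True then show ?thesis by (simp add: Td_def Td_loc_def cc_def kern_apply)
next
  case False
  have "(\<Sum>s'\<in>UNIV. (\<Sum>a\<in>UNIV. \<pi> (fst z) (snd z) a * p (fst z) a s') * V (s', snd z \<and> fst z \<notin> G))
      = (\<Sum>a\<in>UNIV. \<pi> (fst z) (snd z) a * (\<Sum>s'\<in>UNIV. p (fst z) a s' * V (s', snd z \<and> fst z \<notin> G)))"
    by (simp add: sum_distrib_left sum_distrib_right mult.assoc) (rule sum.swap)
  then show ?thesis using False by (simp add: Td_def Td_loc_def cc_def kern_apply)
qed

lemma occ_first: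
  "occ p G Sterm \<pi> z (Suc t) w = (\<Sum>v\<in>UNIV. kern p G Sterm \<pi> z v * occ p G Sterm \<pi> v t w)"
proof (induction t arbitrary: w)
  case 0
  show ?case by (simp add: sum_ind sum_ind2)
next
  case (Suc t)
  have "occ p G Sterm \<pi> z (Suc (Suc t)) w = (\<Sum>u\<in>UNIV. occ p G Sterm \<pi> z (Suc t) u * kern p G Sterm \<pi> u w)"
    by simp
  also have "\<dots> = (\<Sum>u\<in>UNIV. (\<Sum>v\<in>UNIV. kern p G Sterm \<pi> z v * occ p G Sterm \<pi> v t u) * kern p G Sterm \<pi> u w)"
    using Suc by simp
  also have "\<dots> = (\<Sum>v\<in>UNIV. kern p G Sterm \<pi> z v * (\<Sum>u\<in>UNIV. occ p G Sterm \<pi> v t u * kern p G Sterm \<pi> u w))"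
    by (simp add: sum_distrib_left sum_distrib_right mult.assoc) (rule sum.swap)
  also have "\<dots> = (\<Sum>v\<in>UNIV. kern p G Sterm \<pi> z v * occ p G Sterm \<pi> v (Suc t) w)" by simp
  finally show ?case .
qed

definition EE where "EE p G Sterm \<pi> t z = (\<Sum>w\<in>UNIV. occ p G Sterm \<pi> z t w * cc G Sterm w)"

lemma EE_Suc: "EE p G Sterm \<pi> (Suc t) z = (\<Sum>v\<in>UNIV. kern p G Sterm \<pi> z v * EE p G Sterm \<pi> t v)"
  unfolding EE_def occ_first
  by (simp add: sum_distrib_left sum_distrib_right mult.assoc) (rule sum.swap)

lemma EE_0: "EE p G Sterm \<pi> 0 z = cc G Sterm z"
  unfolding EE_def by (simp add: sum_ind)

lemma Td_iter0: "((Td p G Sterm \<pi>) ^^ n) (\<lambda>_. 0) z = (\<Sum>t<n. EE p G Sterm \<pi> t z)"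
proof (induction n arbitrary: z)
  case 0 then show ?case by simp
next
  case (Suc n)
  have IH: "((Td p G Sterm \<pi>) ^^ n) (\<lambda>_. 0) = (\<lambda>z. \<Sum>t<n. EE p G Sterm \<pi> t z)" using Suc by auto
  have "((Td p G Sterm \<pi>) ^^ Suc n) (\<lambda>_. 0) z = Td p G Sterm \<pi> (\<lambda>z. \<Sum>t<n. EE p G Sterm \<pi> t z) z"
    using IH by simp
  also have "\<dots> = cc G Sterm z + (\<Sum>v\<in>UNIV. kern p G Sterm \<pi> z v * (\<Sum>t<n. EE p G Sterm \<pi> t v))"
    by (rule Td_kern)
  also have "\<dots> = EE p G Sterm \<pi> 0 z + (\<Sum>t<n. EE p G Sterm \<pi> (Suc t) z)"
  proof -
    have "(\<Sum>v\<in>UNIV. kern p G Sterm \<pi> z v * (\<Sum>t<n. EE p G Sterm \<pi> t v)) = (\<Sum>t<n. EE p G Sterm \<pi> (Suc t) z)"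
      by (simp add: EE_Suc sum_distrib_left) (rule sum.swap)
    thus ?thesis by (simp add: EE_0)
  qed
  also have "\<dots> = (\<Sum>t<Suc n. EE p G Sterm \<pi> t z)" by (rule sum.lessThan_Suc_shift[symmetric])
  finally show ?case .
qed

lemma Td_lip:
  assumes "is_mdp p" "is_policy \<pi>"
  shows "\<bar>Td p G Sterm \<pi> V z - Td p G Sterm \<pi> W z\<bar> \<le> Mop p G Sterm (\<lambda>w. \<bar>V w - W w\<bar>) z"
  using Td_loc_lip[OF assms(1), where q="\<pi> (fst z) (snd z)" and G=G and Sterm=Sterm and V=V and W=W and s="fst z" and x="snd z"] assms(2)
  unfolding Td_def is_policy_def by simp

lemma Td_mono:
  assumes "is_mdp p" "is_policy \<pi>" "\<And>w. V w \<le> W w"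
  shows "Td p G Sterm \<pi> V z \<le> Td p G Sterm \<pi> W z"
  using assms mdp_nonneg[OF assms(1)] unfolding Td_def Td_loc_def is_policy_def is_dist_def
  by (auto intro!: sum_mono mult_left_mono)

lemma Vpi_char:
  assumes mdp: "is_mdp p" and pol: "is_policy \<pi>"
    and N: "0 < N" "0 \<le> \<gamma>" "\<gamma> < 1" "\<And>z. (Mop p G Sterm ^^ N) (\<lambda>_. 1) z \<le> \<gamma>"
  shows "Td p G Sterm \<pi> (Vpi p G Sterm \<pi>) = Vpi p G Sterm \<pi>
    \<and> (\<forall>V0 z. (\<lambda>n. ((Td p G Sterm \<pi>) ^^ n) V0 z) \<longlonglongrightarrow> Vpi p G Sterm \<pi> z)"
proof -
  obtain F where F: "Td p G Sterm \<pi> F = F" "\<And>V0 z. (\<lambda>n. ((Td p G Sterm \<pi>) ^^ n) V0 z) \<longlonglongrightarrow> F z"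
    using Mop_fp[OF mdp Td_lip[OF mdp pol] N] by blast
  have "Vpi p G Sterm \<pi> z = F z" for z
  proof -
    have "(\<lambda>n. \<Sum>t<n. EE p G Sterm \<pi> t z) \<longlonglongrightarrow> F z" using F(2)[of "\<lambda>_. 0" z] by (simp add: Td_iter0)
    hence "(\<lambda>t. EE p G Sterm \<pi> t z) sums F z" by (simp add: sums_def)
    hence "(\<Sum>t. EE p G Sterm \<pi> t z) = F z" by (rule sums_unique[symmetric])
    moreover have "Vpi p G Sterm \<pi> z = (\<Sum>t. EE p G Sterm \<pi> t z)" unfolding Vpi_def EE_def cc_def by (rule refl)
    ultimately show ?thesis by simp
  qed
  hence "Vpi p G Sterm \<pi> = F" by (rule ext)
  thus ?thesis using F by simp
qed


lemma Texp_props: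
  fixes p :: "'s::finite \<Rightarrow> 'a::finite \<Rightarrow> 's \<Rightarrow> real"
  assumes mdp: "is_mdp p" and ne: "\<And>s x. \<exists>q. feasible_loc p G Sterm L s x q"
  shows "\<And>q V s x. feasible_loc p G Sterm L s x q \<Longrightarrow> Td_loc p G Sterm q V s x \<le> Texp p G Sterm L V (s, x)"
    and "\<And>V W z. \<bar>Texp p G Sterm L V z - Texp p G Sterm L W z\<bar> \<le> Mop p G Sterm (\<lambda>w. \<bar>V w - W w\<bar>) z"
proof -
  define SS where "SS V s x = {Td_loc p G Sterm q V s x | q. feasible_loc p G Sterm L s x q}" for V s x
  have Tx: "Texp p G Sterm L V (s, x) = Sup (SS V s x)" for V s x unfolding Texp_def SS_def by simp
  have nes: "SS V s x \<noteq> {}" for V s x using ne[of s x] unfolding SS_def by blast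
  have lip: "Td_loc p G Sterm q V s x \<le> Td_loc p G Sterm q W s x + Mop p G Sterm (\<lambda>w. \<bar>V w - W w\<bar>) (s, x)"
    if "feasible_loc p G Sterm L s x q" for q V W s x
    using Td_loc_lip[OF mdp, of q G Sterm V s x W] that unfolding feasible_loc_def by linarith
  have bdd: "bdd_above (SS V s x)" for V s x
  proof (rule bdd_aboveI)
    fix y assume "y \<in> SS V s x"
    then obtain q where q: "feasible_loc p G Sterm L s x q" "y = Td_loc p G Sterm q V s x" unfolding SS_def by blast
    have "Td_loc p G Sterm q (\<lambda>_. 0) s x \<le> 1" by (simp add: Td_loc_def dcost_def)
    thus "y \<le> 1 + Mop p G Sterm (\<lambda>w. \<bar>V w - 0\<bar>) (s, x)" using lip[OF q(1), of V "\<lambda>_. 0"] q(2) by simp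
  qed
  show up: "Td_loc p G Sterm q V s x \<le> Texp p G Sterm L V (s, x)" if "feasible_loc p G Sterm L s x q" for q V s x
    unfolding Tx by (rule cSup_upper[OF _ bdd]) (use that in \<open>auto simp: SS_def\<close>)
  have one: "Texp p G Sterm L V (s, x) \<le> Texp p G Sterm L W (s, x) + Mop p G Sterm (\<lambda>w. \<bar>V w - W w\<bar>) (s, x)" for V W s x
  proof -
    have "Sup (SS V s x) \<le> Texp p G Sterm L W (s, x) + Mop p G Sterm (\<lambda>w. \<bar>V w - W w\<bar>) (s, x)"
    proof (rule cSup_least[OF nes])
      fix y assume "y \<in> SS V s x"
      then obtain q where q: "feasible_loc p G Sterm L s x q" "y = Td_loc p G Sterm q V s x" unfolding SS_def by blast
      show "y \<le> Texp p G Sterm L W (s, x) + Mop p G Sterm (\<lambda>w. \<bar>V w - W w\<bar>) (s, x)"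
        using lip[OF q(1), of V W] up[OF q(1), of W] q(2) by linarith
    qed
    thus ?thesis unfolding Tx .
  qed
  show "\<bar>Texp p G Sterm L V z - Texp p G Sterm L W z\<bar> \<le> Mop p G Sterm (\<lambda>w. \<bar>V w - W w\<bar>) z" for V W z
  proof -
    obtain s x where z: "z = (s, x)" by (cases z)
    have e: "(\<lambda>w. \<bar>W w - V w\<bar>) = (\<lambda>w. \<bar>V w - W w\<bar>)" by (auto simp: abs_minus_commute)
    show ?thesis using one[of V s x W] one[of W s x V] unfolding z e by linarith
  qed
qed

theorem proposition2:
  fixes p :: "'s::finite \<Rightarrow> 'a::finite \<Rightarrow> 's \<Rightarrow> real"
    and G Sterm S0 :: "'s set"
    and \<alpha> :: real
    and L :: "'s \<times> bool \<Rightarrow> real"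
    and \<pi>s :: "'s \<Rightarrow> bool \<Rightarrow> 'a \<Rightarrow> real"
    and s0 :: 's
  assumes mdp: "is_mdp p"
    and standing: "standing_assumption p G Sterm"
    and alpha: "0 < \<alpha>" "\<alpha> < 1"
    and pol_s: "is_policy \<pi>s"
    and lyap: "lyapunov p G Sterm \<alpha> S0 L \<pi>s"
  shows "\<exists>Vexp.
      Texp p G Sterm L Vexp = Vexp
    \<and> (\<forall>W. Texp p G Sterm L W = W \<longrightarrow> W = Vexp)
    \<and> (\<forall>V0 z. (\<lambda>n. ((Texp p G Sterm L) ^^ n) V0 z) \<longlonglongrightarrow> Vexp z)
    \<and> (\<forall>\<pi>e. is_policy \<pi>e
           \<and> (\<forall>s x. feasible_loc p G Sterm L s x (\<pi>e s x)
                   \<and> Td_loc p G Sterm (\<pi>e s x) Vexp s x = Texp p G Sterm L Vexp (s, x))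
         \<longrightarrow> Vpi p G Sterm \<pi>e = Vexp
           \<and> (\<forall>z. Td p G Sterm \<pi>e L z \<le> L z)
           \<and> (\<forall>\<pi>. is_policy \<pi> \<and> (\<forall>z. Td p G Sterm \<pi> L z \<le> L z)
                  \<longrightarrow> Vpi p G Sterm \<pi> (s0, True) \<le> Vpi p G Sterm \<pi>e (s0, True)))"
proof -
  obtain N \<gamma> where N: "0 < N" "0 \<le> \<gamma>" "\<gamma> < 1" "\<And>z. (Mop p G Sterm ^^ N) (\<lambda>_. 1) z \<le> \<gamma>"
    using standing_N[OF mdp standing] by blast
  have feas: "feasible_loc p G Sterm L s x (\<pi> s x)" if "is_policy \<pi>" "\<forall>z. Td p G Sterm \<pi> L z \<le> L z" for \<pi> s x
    using that unfolding feasible_loc_def is_policy_def Td_def by (metis fst_conv snd_conv)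
  have ne: "\<exists>q. feasible_loc p G Sterm L s x q" for s x
    using feas[OF pol_s] lyap unfolding lyapunov_def by blast
  note TP = Texp_props[OF mdp ne]
  obtain Vexp where V: "Texp p G Sterm L Vexp = Vexp"
    "\<And>V0 z. (\<lambda>n. ((Texp p G Sterm L) ^^ n) V0 z) \<longlonglongrightarrow> Vexp z"
    using Mop_fp[OF mdp TP(2) N] by blast
  have uniq: "W = Vexp" if "Texp p G Sterm L W = W" for W
  proof
    fix z :: "'s \<times> bool"
    have "((Texp p G Sterm L) ^^ n) W = W" for n by (induction n) (simp_all add: that)
    hence "(\<lambda>n. ((Texp p G Sterm L) ^^ n) W z) = (\<lambda>n. W z)" by simp
    thus "W z = Vexp z" using V(2)[of W z] by (simp add: LIMSEQ_const_iff)
  qed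
  have main: "Vpi p G Sterm \<pi>e = Vexp
           \<and> (\<forall>z. Td p G Sterm \<pi>e L z \<le> L z)
           \<and> (\<forall>\<pi>. is_policy \<pi> \<and> (\<forall>z. Td p G Sterm \<pi> L z \<le> L z)
                  \<longrightarrow> Vpi p G Sterm \<pi> (s0, True) \<le> Vpi p G Sterm \<pi>e (s0, True))"
    if pe: "is_policy \<pi>e" and pe2: "\<forall>s x. feasible_loc p G Sterm L s x (\<pi>e s x)
                   \<and> Td_loc p G Sterm (\<pi>e s x) Vexp s x = Texp p G Sterm L Vexp (s, x)" for \<pi>e
  proof -
    have TdV: "Td p G Sterm \<pi>e Vexp = Vexp"
    proof
      fix z :: "'s \<times> bool"
      obtain s x where z: "z = (s, x)" by (cases z)
      show "Td p G Sterm \<pi>e Vexp z = Vexp z" using pe2 V(1) unfolding z Td_def by (metis fst_conv snd_conv)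
    qed
    have VE: "Vpi p G Sterm \<pi>e = Vexp"
    proof
      fix z :: "'s \<times> bool"
      have "((Td p G Sterm \<pi>e) ^^ n) Vexp = Vexp" for n by (induction n) (simp_all add: TdV)
      hence "(\<lambda>n. ((Td p G Sterm \<pi>e) ^^ n) Vexp z) = (\<lambda>n. Vexp z)" by simp
      thus "Vpi p G Sterm \<pi>e z = Vexp z"
        using conjunct2[OF Vpi_char[OF mdp pe N]] LIMSEQ_const_iff by metis
    qed
    have LL: "\<forall>z. Td p G Sterm \<pi>e L z \<le> L z"
    proof
      fix z :: "'s \<times> bool"
      obtain s x where z: "z = (s, x)" by (cases z)
      show "Td p G Sterm \<pi>e L z \<le> L z" using pe2 unfolding z Td_def feasible_loc_def by simp
    qed
    have opt: "Vpi p G Sterm \<pi> z \<le> Vexp z" if pol: "is_policy \<pi>" and c: "\<forall>z. Td p G Sterm \<pi> L z \<le> L z" for \<pi> z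
    proof -
      have step: "Td p G Sterm \<pi> Vexp w \<le> Vexp w" for w
      proof -
        obtain s x where w: "w = (s, x)" by (cases w)
        have "Td p G Sterm \<pi> Vexp w = Td_loc p G Sterm (\<pi> s x) Vexp s x" unfolding w Td_def by simp
        also have "\<dots> \<le> Texp p G Sterm L Vexp (s, x)" by (rule TP(1)[OF feas[OF pol c]])
        finally show ?thesis using V(1) unfolding w by simp
      qed
      have it: "((Td p G Sterm \<pi>) ^^ n) Vexp w \<le> Vexp w" for n w
      proof (induction n arbitrary: w)
        case 0 then show ?case by simp
      next
        case (Suc n)
        have "((Td p G Sterm \<pi>) ^^ Suc n) Vexp w = Td p G Sterm \<pi> (((Td p G Sterm \<pi>) ^^ n) Vexp) w" by simp
        also have "\<dots> \<le> Td p G Sterm \<pi> Vexp w" by (rule Td_mono[OF mdp pol Suc])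
        also have "\<dots> \<le> Vexp w" by (rule step)
        finally show ?case .
      qed
      have "(\<lambda>n. ((Td p G Sterm \<pi>) ^^ n) Vexp z) \<longlonglongrightarrow> Vpi p G Sterm \<pi> z"
        using conjunct2[OF Vpi_char[OF mdp pol N]] by blast
      thus ?thesis by (rule LIMSEQ_le_const2) (use it in auto)
    qed
    show ?thesis using VE LL opt by auto
  qed
  show ?thesis
    apply (rule exI[of _ Vexp])
    using V uniq main by blast
qed

end
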